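(* Let $G$ be a connected graph of order $n$ without isolated vertices and with maximum degree $\Delta(G)=n-1$. Then $\chi_{dom}(G)=\chi_d^t(G)=\chi(G)$.
   Context: All graphs are finite and simple. A proper coloring of $G$ partitions $V(G)$ into independent color classes; $\chi(G)$ is the chromatic number. A dominated coloring (dom-coloring) of $G$ is a proper coloring in which every color class is dominated by at least one vertex, i.e. for each color class $C$ there is a vertex of $G$ adjacent to every vertex of $C$; $\chi_{dom}(G)$ is the minimum number of colors in a dominated coloring. For $G$ without isolated vertices, a total dominator coloring is a proper coloring in which every vertex is adjacent to every vertex of some color class other than its own; $\chi_d^t(G)$ is the minimum number of colors in such a coloring. *)

theory Defs
  imports Main
begin

definition simple_graph :: "'a set \<Rightarrow> ('a \<Rightarrow> 'a \<Rightarrow> bool) \<Rightarrow> bool" where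
  "simple_graph V E \<longleftrightarrow> finite V \<and> (\<forall>u v. E u v \<longrightarrow> u \<in> V \<and> v \<in> V)
     \<and> (\<forall>u v. E u v \<longrightarrow> E v u) \<and> (\<forall>v. \<not> E v v)"

definition connected_graph :: "'a set \<Rightarrow> ('a \<Rightarrow> 'a \<Rightarrow> bool) \<Rightarrow> bool" where
  "connected_graph V E \<longleftrightarrow> (\<forall>u\<in>V. \<forall>v\<in>V. (u, v) \<in> {(x, y). E x y}\<^sup>*)"

definition degree :: "'a set \<Rightarrow> ('a \<Rightarrow> 'a \<Rightarrow> bool) \<Rightarrow> 'a \<Rightarrow> nat" where
  "degree V E v = card {u\<in>V. E v u}"

definition max_degree :: "'a set \<Rightarrow> ('a \<Rightarrow> 'a \<Rightarrow> bool) \<Rightarrow> nat" where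
  "max_degree V E = Max (degree V E ` V)"

definition no_isolated :: "'a set \<Rightarrow> ('a \<Rightarrow> 'a \<Rightarrow> bool) \<Rightarrow> bool" where
  "no_isolated V E \<longleftrightarrow> (\<forall>v\<in>V. \<exists>u\<in>V. E v u)"

definition proper_coloring :: "'a set \<Rightarrow> ('a \<Rightarrow> 'a \<Rightarrow> bool) \<Rightarrow> ('a \<Rightarrow> nat) \<Rightarrow> bool" where
  "proper_coloring V E c \<longleftrightarrow> (\<forall>u\<in>V. \<forall>v\<in>V. E u v \<longrightarrow> c u \<noteq> c v)"

definition color_class :: "'a set \<Rightarrow> ('a \<Rightarrow> nat) \<Rightarrow> nat \<Rightarrow> 'a set" where
  "color_class V c i = {v\<in>V. c v = i}"

definition dom_coloring :: "'a set \<Rightarrow> ('a \<Rightarrow> 'a \<Rightarrow> bool) \<Rightarrow> ('a \<Rightarrow> nat) \<Rightarrow> bool" where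
  "dom_coloring V E c \<longleftrightarrow> proper_coloring V E c \<and>
     (\<forall>i\<in>c ` V. \<exists>w\<in>V. \<forall>v\<in>color_class V c i. E w v)"

definition total_dominator_coloring :: "'a set \<Rightarrow> ('a \<Rightarrow> 'a \<Rightarrow> bool) \<Rightarrow> ('a \<Rightarrow> nat) \<Rightarrow> bool" where
  "total_dominator_coloring V E c \<longleftrightarrow> proper_coloring V E c \<and>
     (\<forall>v\<in>V. \<exists>i\<in>c ` V. i \<noteq> c v \<and> (\<forall>u\<in>color_class V c i. E v u))"

definition chromatic_number :: "'a set \<Rightarrow> ('a \<Rightarrow> 'a \<Rightarrow> bool) \<Rightarrow> nat" where
  "chromatic_number V E = (LEAST k. \<exists>c. proper_coloring V E c \<and> card (c ` V) = k)"

definition dom_chromatic_number :: "'a set \<Rightarrow> ('a \<Rightarrow> 'a \<Rightarrow> bool) \<Rightarrow> nat" where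
  "dom_chromatic_number V E = (LEAST k. \<exists>c. dom_coloring V E c \<and> card (c ` V) = k)"

definition total_dominator_chromatic_number :: "'a set \<Rightarrow> ('a \<Rightarrow> 'a \<Rightarrow> bool) \<Rightarrow> nat" where
  "total_dominator_chromatic_number V E =
     (LEAST k. \<exists>c. total_dominator_coloring V E c \<and> card (c ` V) = k)"

end

theory Submission
  imports Defs
begin

lemma key:
  assumes sg: "simple_graph V E" and w: "w \<in> V" and adj: "\<forall>u\<in>V. u \<noteq> w \<longrightarrow> E w u"
    and ni: "no_isolated V E" and pc: "proper_coloring V E c"
  shows "dom_coloring V E c \<and> total_dominator_coloring V E c"
proof -
  have sym: "\<And>u v. E u v \<Longrightarrow> E v u" and irr: "\<And>v. \<not> E v v"
    and inV: "\<And>u v. E u v \<Longrightarrow> u \<in> V \<and> v \<in> V"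
    using sg unfolding simple_graph_def by blast+
  have cls: "color_class V c (c w) = {w}"
  proof -
    { fix u assume "u \<in> V" "c u = c w" "u \<noteq> w"
      then have False using adj pc w unfolding proper_coloring_def by metis }
    then show ?thesis using w unfolding color_class_def by blast
  qed
  obtain x where x: "x \<in> V" "E w x" using ni w unfolding no_isolated_def by blast
  have xw: "c x \<noteq> c w" using pc x w sym unfolding proper_coloring_def by metis
  have d: "dom_coloring V E c"
    unfolding dom_coloring_def
  proof (intro conjI pc ballI)
    fix i assume i: "i \<in> c ` V"
    show "\<exists>z\<in>V. \<forall>v\<in>color_class V c i. E z v"
    proof (cases "i = c w")
      case True
      then show ?thesis using cls x sym by auto
    next
      case False
      then show ?thesis using w adj unfolding color_class_def by auto
    qed
  qed
  have t: "total_dominator_coloring V E c"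
    unfolding total_dominator_coloring_def
  proof (intro conjI pc ballI)
    fix v assume v: "v \<in> V"
    show "\<exists>i\<in>c ` V. i \<noteq> c v \<and> (\<forall>u\<in>color_class V c i. E v u)"
    proof (cases "v = w")
      case True
      have "\<forall>u\<in>color_class V c (c x). E v u"
        using True adj xw unfolding color_class_def by auto
      then show ?thesis using True x xw by blast
    next
      case False
      have "c w \<noteq> c v" using pc v w adj False unfolding proper_coloring_def by metis
      moreover have "\<forall>u\<in>color_class V c (c w). E v u" using cls adj v False sym by auto
      ultimately show ?thesis using w by blast
    qed
  qed
  show ?thesis using d t by blast
qed

theorem mainTheorem1:
  fixes V :: "'a set" and E :: "'a \<Rightarrow> 'a \<Rightarrow> bool" and n :: nat
  assumes "simple_graph V E"
    and "V \<noteq> {}"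
    and "card V = n"
    and "connected_graph V E"
    and "no_isolated V E"
    and "max_degree V E = n - 1"
  shows "dom_chromatic_number V E = chromatic_number V E
       \<and> total_dominator_chromatic_number V E = chromatic_number V E"
proof -
  have fin: "finite V" using assms(1) unfolding simple_graph_def by blast
  have irr: "\<And>v. \<not> E v v" using assms(1) unfolding simple_graph_def by blast
  have "max_degree V E \<in> degree V E ` V"
    unfolding max_degree_def using fin assms(2) by (intro Max_in) auto
  then obtain w where w: "w \<in> V" "degree V E w = n - 1" using assms(6) by auto
  have sub: "{u\<in>V. E w u} \<subseteq> V - {w}" using irr by auto
  have "card (V - {w}) = n - 1" using w fin assms(3) by simp
  then have eq: "{u\<in>V. E w u} = V - {w}"
    using card_subset_eq[OF _ sub] fin w(2) unfolding degree_def by auto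
  have adj: "\<forall>u\<in>V. u \<noteq> w \<longrightarrow> E w u" using eq by blast
  have D: "\<And>c. dom_coloring V E c = proper_coloring V E c"
    using key[OF assms(1) w(1) adj assms(5)] dom_coloring_def by blast
  have T: "\<And>c. total_dominator_coloring V E c = proper_coloring V E c"
    using key[OF assms(1) w(1) adj assms(5)] total_dominator_coloring_def by blast
  show ?thesis unfolding dom_chromatic_number_def total_dominator_chromatic_number_def
      chromatic_number_def D T by simp
qed

end
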